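(* Given the ability to perform incoherent unitaries, computational basis measurements and classical control, it is impossible to implement any coherent unitary (e.g. the Hadamard gate) exactly with any non-zero probability, even when supplemented with an arbitrary ancillary state.
   Context: Fix the computational basis $\{|x\rangle\}$. A unitary is incoherent if it has the form $U=\sum_x e^{i\theta_x}|\pi(x)\rangle\langle x|$ for real $\theta_x$ and a permutation $\pi$; otherwise it is coherent (maps some basis state to a superposition). Operations built from incoherent unitaries, computational basis measurements/preparations, classical control and an ancilla $\tau$ are modelled (via deferred measurement, with quantum-controlled incoherent unitaries being incoherent) as channels $\rho\mapsto \mathrm{Tr}_2\big(U(\rho\otimes\tau)U^\dagger\big)$ with $U$ incoherent, or in the probabilistic case as convex combinations of normalised subchannels $\rho\mapsto \alpha\,\mathrm{Tr}_X\big((I\otimes|x\rangle\langle x|)\,U(\rho\otimes\tau)U^\dagger\big)$ with $\alpha$ independent of $\rho$. The ancilla $\tau$ is an arbitrary fixed state of arbitrary dimension. *)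

theory Defs
  imports Complex_Main "Jordan_Normal_Form.Matrix"
begin

text \<open>A bipartite space C^d (x) C^m is indexed by
i*m + j for i<d, j<m (first factor = system, second factor = ancilla / register).\<close>

definition cadj :: "complex mat \<Rightarrow> complex mat" where
  "cadj A = mat (dim_col A) (dim_row A) (\<lambda>(i,j). cnj (A $$ (j,i)))"

definition mtrace :: "complex mat \<Rightarrow> complex" where
  "mtrace A = (\<Sum>i<dim_row A. A $$ (i,i))"

definition unitary_mat :: "nat \<Rightarrow> complex mat \<Rightarrow> bool" where
  "unitary_mat n U \<longleftrightarrow> U \<in> carrier_mat n n \<and> cadj U * U = 1\<^sub>m n \<and> U * cadj U = 1\<^sub>m n"

definition psd_mat :: "nat \<Rightarrow> complex mat \<Rightarrow> bool" where
  "psd_mat n A \<longleftrightarrow> A \<in> carrier_mat n n \<and>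
     (\<forall>v :: nat \<Rightarrow> complex.
        Im (\<Sum>i<n. \<Sum>j<n. cnj (v i) * A $$ (i,j) * v j) = 0 \<and>
        Re (\<Sum>i<n. \<Sum>j<n. cnj (v i) * A $$ (i,j) * v j) \<ge> 0)"

definition density :: "nat \<Rightarrow> complex mat \<Rightarrow> bool" where
  "density n \<rho> \<longleftrightarrow> psd_mat n \<rho> \<and> mtrace \<rho> = 1"

definition incoherent_unitary :: "nat \<Rightarrow> complex mat \<Rightarrow> bool" where
  "incoherent_unitary n U \<longleftrightarrow> U \<in> carrier_mat n n \<and>
     (\<exists>\<pi> \<theta>. \<pi> permutes {..<n} \<and>
        (\<forall>r<n. \<forall>c<n. U $$ (r,c) = (if r = \<pi> c then cis (\<theta> c) else 0)))"

definition coherent_unitary :: "nat \<Rightarrow> complex mat \<Rightarrow> bool" where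
  "coherent_unitary n V \<longleftrightarrow> unitary_mat n V \<and> \<not> incoherent_unitary n V"

definition kron :: "nat \<Rightarrow> nat \<Rightarrow> complex mat \<Rightarrow> complex mat \<Rightarrow> complex mat" where
  "kron d m A B = mat (d*m) (d*m) (\<lambda>(r,c). A $$ (r div m, c div m) * B $$ (r mod m, c mod m))"

definition ptrace2 :: "nat \<Rightarrow> nat \<Rightarrow> complex mat \<Rightarrow> complex mat" where
  "ptrace2 d m M = mat d d (\<lambda>(i,i'). \<Sum>j<m. M $$ (i*m + j, i'*m + j))"

definition basis_proj :: "nat \<Rightarrow> nat \<Rightarrow> complex mat" where
  "basis_proj m x = mat m m (\<lambda>(i,j). if i = x \<and> j = x then 1 else 0)"

definition inc_channel ::
  "nat \<Rightarrow> nat \<Rightarrow> complex mat \<Rightarrow> complex mat \<Rightarrow> complex mat \<Rightarrow> complex mat" where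
  "inc_channel d m U \<tau> \<rho> = ptrace2 d m (U * kron d m \<rho> \<tau> * cadj U)"

definition inc_subchannel ::
  "nat \<Rightarrow> nat \<Rightarrow> complex mat \<Rightarrow> complex mat \<Rightarrow> nat \<Rightarrow> real \<Rightarrow> complex mat \<Rightarrow> complex mat" where
  "inc_subchannel d m U \<tau> x \<alpha> \<rho> =
     complex_of_real \<alpha> \<cdot>\<^sub>m ptrace2 d m (kron d m (1\<^sub>m d) (basis_proj m x) * U * kron d m \<rho> \<tau> * cadj U)"

end

theory Submission
  imports Defs
begin

lemma mult_entry:
  assumes "A \<in> carrier_mat n k" "B \<in> carrier_mat k l" "i < n" "j < l"
  shows "(A * B) $$ (i,j) = (\<Sum>t<k. A $$ (i,t) * B $$ (t,j))"
  using assms by (auto simp: scalar_prod_def lessThan_atLeast0 intro!: sum.cong)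

lemma cadj_carrier[simp]: "A \<in> carrier_mat n k \<Longrightarrow> cadj A \<in> carrier_mat k n"
  by (auto simp: cadj_def)

lemma cadj_index: "A \<in> carrier_mat n k \<Longrightarrow> i < k \<Longrightarrow> j < n \<Longrightarrow> cadj A $$ (i,j) = cnj (A $$ (j,i))"
  by (auto simp: cadj_def)

lemma inc_diag:
  assumes "incoherent_unitary n U"
  shows "\<exists>\<sigma>. (\<forall>a<n. \<sigma> a < n) \<and>
     (\<forall>M \<in> carrier_mat n n. \<forall>a<n. (U * M * cadj U) $$ (a,a) = M $$ (\<sigma> a, \<sigma> a))"
proof -
  from assms obtain \<pi> \<theta> where U: "U \<in> carrier_mat n n" and p: "\<pi> permutes {..<n}"
    and E: "\<forall>r<n. \<forall>c<n. U $$ (r,c) = (if r = \<pi> c then cis (\<theta> c) else 0)"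
    unfolding incoherent_unitary_def by blast
  define \<sigma> where "\<sigma> = Hilbert_Choice.inv \<pi>"
  have sp: "\<sigma> permutes {..<n}" unfolding \<sigma>_def using permutes_inv[OF p] .
  have sl: "\<sigma> a < n" if "a < n" for a using permutes_in_image[OF sp] that by auto
  have eqv: "(a = \<pi> t) = (t = \<sigma> a)" for a t
    unfolding \<sigma>_def using permutes_inv_eq[OF p] by metis
  have E2: "U $$ (a,t) = (if t = \<sigma> a then cis (\<theta> (\<sigma> a)) else 0)" if "a<n" "t<n" for a t
    using E that eqv by auto
  show ?thesis
  proof (intro exI conjI allI impI ballI)
    fix a assume "a < n" then show "\<sigma> a < n" by (rule sl)
  next
    fix M :: "complex mat" and a assume M: "M \<in> carrier_mat n n" and a: "a < n"
    have "(U * M * cadj U) $$ (a,a) = (\<Sum>u<n. (U*M) $$ (a,u) * cadj U $$ (u,a))"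
      using U M a by (intro mult_entry) auto
    also have "\<dots> = (\<Sum>u<n. (cis (\<theta> (\<sigma> a)) * M $$ (\<sigma> a, u)) * cnj (U $$ (a,u)))"
    proof (rule sum.cong[OF refl])
      fix u assume u: "u \<in> {..<n}"
      have "(U*M) $$ (a,u) = (\<Sum>t<n. U $$ (a,t) * M $$ (t,u))"
        using U M a u by (intro mult_entry) auto
      also have "\<dots> = (\<Sum>t<n. if t = \<sigma> a then cis (\<theta> (\<sigma> a)) * M $$ (t,u) else 0)"
        using E2 a by (intro sum.cong) auto
      also have "\<dots> = cis (\<theta> (\<sigma> a)) * M $$ (\<sigma> a, u)"
        using sl[OF a] by (simp add: sum.delta)
      finally show "(U*M) $$ (a,u) * cadj U $$ (u,a) = (cis (\<theta> (\<sigma> a)) * M $$ (\<sigma> a, u)) * cnj (U $$ (a,u))"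
        using U a u by (simp add: cadj_index)
    qed
    also have "\<dots> = (\<Sum>u<n. if u = \<sigma> a then (cis (\<theta> (\<sigma> a)) * M $$ (\<sigma> a, u)) * cnj (cis (\<theta> (\<sigma> a))) else 0)"
      using E2 a by (intro sum.cong) auto
    also have "\<dots> = M $$ (\<sigma> a, \<sigma> a) * (cis (\<theta> (\<sigma> a)) * cnj (cis (\<theta> (\<sigma> a))))"
      using sl[OF a] by (simp add: sum.delta)
    also have "\<dots> = M $$ (\<sigma> a, \<sigma> a)"
      by (simp add: cis_cnj cis_mult)
    finally show "(U * M * cadj U) $$ (a,a) = M $$ (\<sigma> a, \<sigma> a)" .
  qed
qed

lemma idx_lt: "i < d \<Longrightarrow> j < (m::nat) \<Longrightarrow> i*m + j < d*m"
proof -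
  assume "i < d" "j < m"
  then have "i*m + j < i*m + m" by simp
  also have "\<dots> = (i+1)*m" by simp
  also have "\<dots> \<le> d*m" using \<open>i<d\<close> by (intro mult_right_mono) auto
  finally show ?thesis .
qed

lemma kron_carrier[simp]: "kron d m A B \<in> carrier_mat (d*m) (d*m)"
  by (simp add: kron_def)

lemma kron_diag: "b < d*m \<Longrightarrow> kron d m A B $$ (b,b) = A $$ (b div m, b div m) * B $$ (b mod m, b mod m)"
  by (simp add: kron_def)

lemma div_lt: "b < d*m \<Longrightarrow> b div m < (d::nat)"
  by (simp add: less_mult_imp_div_less)

lemma conj_diag_eq:
  assumes "incoherent_unitary (d*m) U" "\<forall>a<d. \<rho>1 $$ (a,a) = \<rho>2 $$ (a,a)"
  shows "\<forall>r<d*m. (U * kron d m \<rho>1 \<tau> * cadj U) $$ (r,r) = (U * kron d m \<rho>2 \<tau> * cadj U) $$ (r,r)"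
proof -
  obtain \<sigma> where s: "\<forall>a<d*m. \<sigma> a < d*m"
    and e: "\<forall>M \<in> carrier_mat (d*m) (d*m). \<forall>a<d*m. (U * M * cadj U) $$ (a,a) = M $$ (\<sigma> a, \<sigma> a)"
    using inc_diag[OF assms(1)] by blast
  show ?thesis
  proof (intro allI impI)
    fix r assume r: "r < d*m"
    have "(U * kron d m \<rho>1 \<tau> * cadj U) $$ (r,r) = kron d m \<rho>1 \<tau> $$ (\<sigma> r, \<sigma> r)"
      using e r by simp
    also have "\<dots> = kron d m \<rho>2 \<tau> $$ (\<sigma> r, \<sigma> r)"
      using s r assms(2) div_lt[of "\<sigma> r" d m] by (simp add: kron_diag)
    also have "\<dots> = (U * kron d m \<rho>2 \<tau> * cadj U) $$ (r,r)"
      using e r by simp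
    finally show "(U * kron d m \<rho>1 \<tau> * cadj U) $$ (r,r) = (U * kron d m \<rho>2 \<tau> * cadj U) $$ (r,r)" .
  qed
qed

lemma channel_diag:
  assumes "incoherent_unitary (d*m) U" "\<forall>a<d. \<rho>1 $$ (a,a) = \<rho>2 $$ (a,a)" "i < d"
  shows "inc_channel d m U \<tau> \<rho>1 $$ (i,i) = inc_channel d m U \<tau> \<rho>2 $$ (i,i)"
  using conj_diag_eq[OF assms(1,2), of \<tau>] assms(3) idx_lt[OF assms(3)]
  by (simp add: inc_channel_def ptrace2_def)

lemma proj_mult_diag:
  assumes X: "X \<in> carrier_mat (d*m) (d*m)" and r: "r < d*m"
  shows "(kron d m (1\<^sub>m d) (basis_proj m x) * X) $$ (r,r) = (if r mod m = x then X $$ (r,r) else 0)"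
proof -
  have m: "0 < m" using r by (cases m) auto
  have "(kron d m (1\<^sub>m d) (basis_proj m x) * X) $$ (r,r)
     = (\<Sum>t<d*m. kron d m (1\<^sub>m d) (basis_proj m x) $$ (r,t) * X $$ (t,r))"
    using X r by (intro mult_entry) auto
  also have "\<dots> = (\<Sum>t<d*m. if t = r then (if r mod m = x then X $$ (r,r) else 0) else 0)"
  proof (rule sum.cong[OF refl])
    fix t assume t: "t \<in> {..<d*m}"
    have dr: "r div m < d" "t div m < d" using r t div_lt by auto
    have mr: "r mod m < m" "t mod m < m" using m by auto
    have "(r div m = t div m \<and> r mod m = t mod m) = (r = t)"
      by (metis div_mult_mod_eq)
    then show "kron d m (1\<^sub>m d) (basis_proj m x) $$ (r,t) * X $$ (t,r) = (if t = r then (if r mod m = x then X $$ (r,r) else 0) else 0)"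
      using r t dr mr by (auto simp: kron_def basis_proj_def)
  qed
  also have "\<dots> = (if r mod m = x then X $$ (r,r) else 0)"
    using r by (simp add: sum.delta)
  finally show ?thesis .
qed

lemma subchannel_diag:
  assumes U: "incoherent_unitary (d*m) U" and eq: "\<forall>a<d. \<rho>1 $$ (a,a) = \<rho>2 $$ (a,a)" and i: "i < d"
    and r1: "\<rho>1 \<in> carrier_mat d d" and r2: "\<rho>2 \<in> carrier_mat d d"
  shows "inc_subchannel d m U \<tau> x \<alpha> \<rho>1 $$ (i,i) = inc_subchannel d m U \<tau> x \<alpha> \<rho>2 $$ (i,i)"
proof -
  have Uc: "U \<in> carrier_mat (d*m) (d*m)" using U by (simp add: incoherent_unitary_def)
  have Pc: "kron d m (1\<^sub>m d) (basis_proj m x) \<in> carrier_mat (d*m) (d*m)" by simp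
  have ex: "kron d m (1\<^sub>m d) (basis_proj m x) * U * kron d m \<rho> \<tau> * cadj U
     = kron d m (1\<^sub>m d) (basis_proj m x) * (U * kron d m \<rho> \<tau> * cadj U)" for \<rho>
    using Uc Pc by (simp add: assoc_mult_mat[of _ "d*m" "d*m" _ "d*m" _ "d*m"])
  have X: "U * kron d m \<rho> \<tau> * cadj U \<in> carrier_mat (d*m) (d*m)" for \<rho>
    using Uc by (meson mult_carrier_mat kron_carrier cadj_carrier)
  have "ptrace2 d m (kron d m (1\<^sub>m d) (basis_proj m x) * U * kron d m \<rho>1 \<tau> * cadj U) $$ (i,i)
      = ptrace2 d m (kron d m (1\<^sub>m d) (basis_proj m x) * U * kron d m \<rho>2 \<tau> * cadj U) $$ (i,i)"
    using i idx_lt[OF i] conj_diag_eq[OF U eq, of \<tau>]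
    by (simp add: ptrace2_def ex proj_mult_diag[OF X])
  then show ?thesis using i by (simp add: inc_subchannel_def ptrace2_def)
qed

definition pure :: "nat \<Rightarrow> (nat \<Rightarrow> complex) \<Rightarrow> complex mat" where
  "pure d \<phi> = mat d d (\<lambda>(i,j). \<phi> i * cnj (\<phi> j))"

lemma pure_density:
  assumes "(\<Sum>i<d. \<phi> i * cnj (\<phi> i)) = 1"
  shows "density d (pure d \<phi>)"
proof -
  have q: "(\<Sum>i<d. \<Sum>j<d. cnj (v i) * pure d \<phi> $$ (i,j) * v j)
        = (\<Sum>i<d. cnj (v i) * \<phi> i) * cnj (\<Sum>i<d. cnj (v i) * \<phi> i)" for v
  proof -
    have "(\<Sum>i<d. cnj (v i) * \<phi> i) * cnj (\<Sum>i<d. cnj (v i) * \<phi> i)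
       = (\<Sum>i<d. cnj (v i) * \<phi> i) * (\<Sum>j<d. cnj (cnj (v j) * \<phi> j))"
      by (simp add: cnj_sum)
    also have "\<dots> = (\<Sum>i<d. \<Sum>j<d. (cnj (v i) * \<phi> i) * cnj (cnj (v j) * \<phi> j))"
      by (rule sum_product)
    also have "\<dots> = (\<Sum>i<d. \<Sum>j<d. cnj (v i) * pure d \<phi> $$ (i,j) * v j)"
      by (intro sum.cong refl) (simp add: pure_def mult_ac)
    finally show ?thesis by simp
  qed
  have w1: "Im (w * cnj w) = 0" for w :: complex
    by (simp add: complex_mult_cnj)
  have w2: "Re (w * cnj w) \<ge> 0" for w :: complex
    by (simp add: complex_mult_cnj)
  show ?thesis unfolding density_def psd_mat_def
  proof (intro conjI allI)
    show "pure d \<phi> \<in> carrier_mat d d" by (simp add: pure_def)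
    show "mtrace (pure d \<phi>) = 1" using assms by (simp add: mtrace_def pure_def)
  next
    fix v
    show "Im (\<Sum>i<d. \<Sum>j<d. cnj (v i) * pure d \<phi> $$ (i,j) * v j) = 0"
      by (subst q) (rule w1)
    show "Re (\<Sum>i<d. \<Sum>j<d. cnj (v i) * pure d \<phi> $$ (i,j) * v j) \<ge> 0"
      by (subst q) (rule w2)
  qed
qed

lemma pure_conj:
  assumes V: "V \<in> carrier_mat d d" and i: "i < d"
  shows "(V * pure d \<phi> * cadj V) $$ (i,i) = (\<Sum>k<d. V $$ (i,k) * \<phi> k) * cnj (\<Sum>k<d. V $$ (i,k) * \<phi> k)"
proof -
  have P: "pure d \<phi> \<in> carrier_mat d d" by (simp add: pure_def)
  have "(V * pure d \<phi> * cadj V) $$ (i,i) = (\<Sum>u<d. (V * pure d \<phi>) $$ (i,u) * cadj V $$ (u,i))"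
    using V P i by (intro mult_entry) auto
  also have "\<dots> = (\<Sum>u<d. ((\<Sum>k<d. V $$ (i,k) * \<phi> k) * cnj (\<phi> u)) * cnj (V $$ (i,u)))"
  proof (rule sum.cong[OF refl])
    fix u assume u: "u \<in> {..<d}"
    have "(V * pure d \<phi>) $$ (i,u) = (\<Sum>k<d. V $$ (i,k) * pure d \<phi> $$ (k,u))"
      using V P i u by (intro mult_entry) auto
    also have "\<dots> = (\<Sum>k<d. V $$ (i,k) * \<phi> k) * cnj (\<phi> u)"
      using u by (simp add: pure_def sum_distrib_right sum_distrib_left mult_ac)
    finally show "(V * pure d \<phi>) $$ (i,u) * cadj V $$ (u,i) = ((\<Sum>k<d. V $$ (i,k) * \<phi> k) * cnj (\<phi> u)) * cnj (V $$ (i,u))"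
      using V i u by (simp add: cadj_index)
  qed
  also have "\<dots> = (\<Sum>k<d. V $$ (i,k) * \<phi> k) * cnj (\<Sum>k<d. V $$ (i,k) * \<phi> k)"
    by (simp add: sum_distrib_left mult_ac)
  finally show ?thesis .
qed

lemma alg_lemma:
  fixes z w :: complex
  assumes "(z+w) * cnj (z+w) = (z-w) * cnj (z-w)"
    and "(z+\<i>*w) * cnj (z+\<i>*w) = (z-\<i>*w) * cnj (z-\<i>*w)"
  shows "z = 0 \<or> w = 0"
proof -
  from assms(1) have "2 * (z * cnj w + w * cnj z) = 0" by (simp add: algebra_simps)
  then have a: "z * cnj w + w * cnj z = 0" by (metis mult_eq_0_iff zero_neq_numeral)
  from assms(2) have b: "z * cnj w - w * cnj z = 0" by (simp add: algebra_simps)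
  from a b have "z * cnj w = 0" by (simp add: algebra_simps)
  then show ?thesis by simp
qed

lemma key:
  assumes Vu: "unitary_mat d V"
  and H: "\<And>\<rho>1 \<rho>2 i. density d \<rho>1 \<Longrightarrow> density d \<rho>2 \<Longrightarrow> (\<forall>a<d. \<rho>1 $$ (a,a) = \<rho>2 $$ (a,a))
            \<Longrightarrow> i < d \<Longrightarrow> (V * \<rho>1 * cadj V) $$ (i,i) = (V * \<rho>2 * cadj V) $$ (i,i)"
  shows "incoherent_unitary d V"
proof -
  have Vc: "V \<in> carrier_mat d d" using Vu by (simp add: unitary_mat_def)
  have step1: "V $$ (i,a) = 0 \<or> V $$ (i,b) = 0" if i: "i<d" and a: "a<d" and b: "b<d" and ab: "a\<noteq>b" for i a b
  proof -
    define s where "s = complex_of_real (1 / sqrt 2)"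
    have r: "(1/sqrt 2) * (1/sqrt 2) = (1/2::real)" by simp
    have ss: "s * cnj s = 1/2"
      unfolding s_def complex_cnj_complex_of_real of_real_mult[symmetric] r by simp
    define \<phi> where "\<phi> c = (\<lambda>k. s * ((if k = a then 1 else 0) + (if k = b then c else 0)))" for c :: complex
    have pk: "\<phi> c k * cnj (\<phi> c k) = (s * cnj s) * ((if k = a then 1 else 0) + (if k = b then 1 else 0))"
      if "c * cnj c = 1" for c k
      using ab that by (auto simp: \<phi>_def)
    have dens: "density d (pure d (\<phi> c))" if "c * cnj c = 1" for c
    proof (rule pure_density)
      have "(\<Sum>k<d. \<phi> c k * cnj (\<phi> c k)) = (\<Sum>k<d. (s * cnj s) * ((if k = a then 1 else 0) + (if k = b then 1 else 0)))"
        using pk[OF that] by simp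
      also have "\<dots> = (s * cnj s) * 2"
        using a b ab by (simp add: sum_distrib_left[symmetric] sum.distrib)
      also have "\<dots> = 1" by (simp only: ss) simp
      finally show "(\<Sum>k<d. \<phi> c k * cnj (\<phi> c k)) = 1" .
    qed
    have diag: "pure d (\<phi> c) $$ (k,k) = pure d (\<phi> c') $$ (k,k)" if "c * cnj c = 1" "c' * cnj c' = 1" "k < d" for c c' k
      using pk[OF that(1)] pk[OF that(2)] that(3) by (simp add: pure_def)
    have lin: "(\<Sum>k<d. V $$ (i,k) * \<phi> c k) = s * (V $$ (i,a) + c * V $$ (i,b))" for c
    proof -
      have "(\<Sum>k<d. V $$ (i,k) * \<phi> c k) = (\<Sum>k<d. (if k = a then s * V $$ (i,k) else 0) + (if k = b then s * c * V $$ (i,k) else 0))"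
        by (intro sum.cong refl) (auto simp: \<phi>_def algebra_simps)
      also have "\<dots> = s * V $$ (i,a) + s * c * V $$ (i,b)"
        using a b by (simp add: sum.distrib)
      finally show ?thesis by (simp add: algebra_simps)
    qed
    have gen: "(V $$ (i,a) + c * V $$ (i,b)) * cnj (V $$ (i,a) + c * V $$ (i,b))
             = (V $$ (i,a) - c * V $$ (i,b)) * cnj (V $$ (i,a) - c * V $$ (i,b))" if c: "c * cnj c = 1" for c
    proof -
      have c2: "(-c) * cnj (-c) = 1" using c by simp
      have "(V * pure d (\<phi> c) * cadj V) $$ (i,i) = (V * pure d (\<phi> (-c)) * cadj V) $$ (i,i)"
        using H[OF dens[OF c] dens[OF c2] _ i] diag[OF c c2] by blast
      then have "(s * (V $$ (i,a) + c * V $$ (i,b))) * cnj (s * (V $$ (i,a) + c * V $$ (i,b)))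
           = (s * (V $$ (i,a) + (-c) * V $$ (i,b))) * cnj (s * (V $$ (i,a) + (-c) * V $$ (i,b)))"
        by (simp only: pure_conj[OF Vc i] lin)
      moreover have "(s * X) * cnj (s * X) = (s * cnj s) * (X * cnj X)" for X
        by (simp add: mult_ac)
      ultimately have "(1/2) * ((V $$ (i,a) + c * V $$ (i,b)) * cnj (V $$ (i,a) + c * V $$ (i,b)))
           = (1/2) * ((V $$ (i,a) + (-c) * V $$ (i,b)) * cnj (V $$ (i,a) + (-c) * V $$ (i,b)))"
        by (simp only: ss)
      then show ?thesis by simp
    qed
    show ?thesis
      by (rule alg_lemma) (use gen[of 1] gen[of \<i>] in auto)
  qed
  have U1: "(\<Sum>k<d. V $$ (i,k) * cnj (V $$ (j,k))) = (if i = j then 1 else 0)" if "i<d" "j<d" for i j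
  proof -
    have "(V * cadj V) $$ (i,j) = (\<Sum>k<d. V $$ (i,k) * cadj V $$ (k,j))"
      using Vc that by (intro mult_entry) auto
    also have "\<dots> = (\<Sum>k<d. V $$ (i,k) * cnj (V $$ (j,k)))"
      using Vc that by (intro sum.cong refl) (simp add: cadj_index)
    finally show ?thesis using Vu that by (simp add: unitary_mat_def)
  qed
  have U2: "(\<Sum>k<d. cnj (V $$ (k,i)) * V $$ (k,j)) = (if i = j then 1 else 0)" if "i<d" "j<d" for i j
  proof -
    have "(cadj V * V) $$ (i,j) = (\<Sum>k<d. cadj V $$ (i,k) * V $$ (k,j))"
      using Vc that by (intro mult_entry) auto
    also have "\<dots> = (\<Sum>k<d. cnj (V $$ (k,i)) * V $$ (k,j))"
      using Vc that by (intro sum.cong refl) (simp add: cadj_index)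
    finally show ?thesis using Vu that by (simp add: unitary_mat_def)
  qed
  have rowu: "a = b" if "i<d" "a<d" "b<d" "V $$ (i,a) \<noteq> 0" "V $$ (i,b) \<noteq> 0" for i a b
    using step1 that by blast
  have colex: "\<exists>r<d. V $$ (r,c) \<noteq> 0" if c: "c<d" for c
  proof (rule ccontr)
    assume "\<not> ?thesis"
    then have "(\<Sum>k<d. cnj (V $$ (k,c)) * V $$ (k,c)) = 0" by (intro sum.neutral) auto
    with U2[OF c c] show False by simp
  qed
  have colu: "r1 = r2" if c: "c<d" and r: "r1<d" "r2<d" "V $$ (r1,c) \<noteq> 0" "V $$ (r2,c) \<noteq> 0" for c r1 r2
  proof (rule ccontr)
    assume ne: "r1 \<noteq> r2"
    have "(\<Sum>k<d. V $$ (r1,k) * cnj (V $$ (r2,k))) = (\<Sum>k<d. if k = c then V $$ (r1,c) * cnj (V $$ (r2,c)) else 0)"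
      using rowu[OF r(1) c _ r(3)] by (intro sum.cong refl) auto
    also have "\<dots> = V $$ (r1,c) * cnj (V $$ (r2,c))" using c by simp
    finally have "V $$ (r1,c) * cnj (V $$ (r2,c)) = 0" using U1[OF r(1,2)] ne by simp
    with r show False by simp
  qed
  define \<pi> where "\<pi> c = (if c < d then (THE r. r<d \<and> V $$ (r,c) \<noteq> 0) else c)" for c
  have pp: "\<pi> c < d \<and> V $$ (\<pi> c, c) \<noteq> 0" if c: "c<d" for c
  proof -
    have "\<exists>!r. r<d \<and> V $$ (r,c) \<noteq> 0" using colex[OF c] colu[OF c] by blast
    from theI'[OF this] show ?thesis using c by (simp add: \<pi>_def)
  qed
  have pz: "V $$ (r,c) = 0" if "r<d" "c<d" "r \<noteq> \<pi> c" for r c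
    using colu[OF that(2) that(1)] pp[OF that(2)] that(3) by blast
  have mag: "cmod (V $$ (\<pi> c, c)) = 1" if c: "c<d" for c
  proof -
    have "(\<Sum>k<d. cnj (V $$ (k,c)) * V $$ (k,c)) = (\<Sum>k<d. if k = \<pi> c then cnj (V $$ (\<pi> c,c)) * V $$ (\<pi> c,c) else 0)"
      using pz c by (intro sum.cong refl) auto
    also have "\<dots> = cnj (V $$ (\<pi> c,c)) * V $$ (\<pi> c,c)" using pp[OF c] by simp
    finally have "cnj (V $$ (\<pi> c,c)) * V $$ (\<pi> c,c) = 1" using U2[OF c c] by simp
    then have "complex_of_real ((cmod (V $$ (\<pi> c,c)))^2) = 1"
      by (subst complex_norm_square) (simp add: mult.commute)
    then have "(cmod (V $$ (\<pi> c,c)))^2 = 1" by (simp only: of_real_eq_1_iff)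
    then show ?thesis using norm_ge_zero[of "V $$ (\<pi> c,c)"] by (simp add: power2_eq_1_iff)
  qed
  define \<theta> where "\<theta> c = Arg (V $$ (\<pi> c, c))" for c
  have cisv: "cis (\<theta> c) = V $$ (\<pi> c, c)" if c: "c<d" for c
  proof -
    have "sgn (V $$ (\<pi> c, c)) = cis (\<theta> c)" using Arg_correct pp[OF c] by (simp add: \<theta>_def)
    moreover have "sgn (V $$ (\<pi> c, c)) = V $$ (\<pi> c, c)" using mag[OF c] by (simp add: sgn_div_norm)
    ultimately show ?thesis by simp
  qed
  have inj: "inj_on \<pi> {..<d}"
  proof (rule inj_onI)
    fix c1 c2 assume "c1 \<in> {..<d}" "c2 \<in> {..<d}" "\<pi> c1 = \<pi> c2"
    then show "c1 = c2" using pp[of c1] pp[of c2] rowu[of "\<pi> c1" c1 c2] by auto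
  qed
  have img: "\<pi> ` {..<d} \<subseteq> {..<d}" using pp by auto
  have "\<pi> ` {..<d} = {..<d}" using endo_inj_surj[OF _ img inj] by simp
  then have bij: "bij_betw \<pi> {..<d} {..<d}" using inj by (simp add: bij_betw_def)
  have perm: "\<pi> permutes {..<d}"
    by (rule bij_imp_permutes[OF bij]) (simp add: \<pi>_def)
  show ?thesis unfolding incoherent_unitary_def
  proof (intro conjI exI allI impI)
    show "V \<in> carrier_mat d d" by (rule Vc)
    show "\<pi> permutes {..<d}" by (rule perm)
    fix r c assume "r<d" "c<d"
    then show "V $$ (r,c) = (if r = \<pi> c then cis (\<theta> c) else 0)"
      using pz cisv by auto
  qed
qed

theorem theorem1:
  fixes d :: nat and V :: "complex mat"
  assumes "coherent_unitary d V"
  shows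
    "(\<forall>m U \<tau>. 0 < m \<longrightarrow> density m \<tau> \<longrightarrow> incoherent_unitary (d*m) U \<longrightarrow>
        \<not> (\<forall>\<rho>. density d \<rho> \<longrightarrow> inc_channel d m U \<tau> \<rho> = V * \<rho> * cadj V))
   \<and>
    (\<forall>(K :: nat set) m U \<tau> x \<alpha> (p :: real).
        finite K \<longrightarrow> p > 0 \<longrightarrow>
        (\<forall>k\<in>K. 0 < m k \<and> density (m k) (\<tau> k) \<and> incoherent_unitary (d * m k) (U k)
                \<and> x k < m k \<and> \<alpha> k \<ge> 0) \<longrightarrow>
        \<not> (\<forall>\<rho>. density d \<rho> \<longrightarrow>
              (\<forall>i<d. \<forall>j<d.
                 (\<Sum>k\<in>K. inc_subchannel d (m k) (U k) (\<tau> k) (x k) (\<alpha> k) \<rho> $$ (i,j))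
                   = complex_of_real p * (V * \<rho> * cadj V) $$ (i,j))))"
proof -
  have Vu: "unitary_mat d V" and ninc: "\<not> incoherent_unitary d V"
    using assms by (auto simp: coherent_unitary_def)
  have dc: "\<rho> \<in> carrier_mat n n" if "density n \<rho>" for n \<rho>
    using that by (simp add: density_def psd_mat_def)
  show ?thesis
  proof (intro conjI allI impI notI)
    fix m U \<tau>
    assume m: "0 < m" and t: "density m \<tau>" and U: "incoherent_unitary (d*m) U"
      and eq: "\<forall>\<rho>. density d \<rho> \<longrightarrow> inc_channel d m U \<tau> \<rho> = V * \<rho> * cadj V"
    have "incoherent_unitary d V"
    proof (rule key[OF Vu])
      fix \<rho>1 \<rho>2 i assume d1: "density d \<rho>1" and d2: "density d \<rho>2"
        and e: "\<forall>a<d. \<rho>1 $$ (a,a) = \<rho>2 $$ (a,a)" and i: "i < d"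
      have "(V * \<rho>1 * cadj V) $$ (i,i) = inc_channel d m U \<tau> \<rho>1 $$ (i,i)" using eq d1 by simp
      also have "\<dots> = inc_channel d m U \<tau> \<rho>2 $$ (i,i)" by (rule channel_diag[OF U e i])
      also have "\<dots> = (V * \<rho>2 * cadj V) $$ (i,i)" using eq d2 by simp
      finally show "(V * \<rho>1 * cadj V) $$ (i,i) = (V * \<rho>2 * cadj V) $$ (i,i)" .
    qed
    with ninc show False by simp
  next
    fix K :: "nat set" and m U \<tau> x \<alpha> and p :: real
    assume K: "finite K" and p: "p > 0"
      and h: "\<forall>k\<in>K. 0 < m k \<and> density (m k) (\<tau> k) \<and> incoherent_unitary (d * m k) (U k)
                \<and> x k < m k \<and> \<alpha> k \<ge> 0"
      and eq: "\<forall>\<rho>. density d \<rho> \<longrightarrow>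
              (\<forall>i<d. \<forall>j<d.
                 (\<Sum>k\<in>K. inc_subchannel d (m k) (U k) (\<tau> k) (x k) (\<alpha> k) \<rho> $$ (i,j))
                   = complex_of_real p * (V * \<rho> * cadj V) $$ (i,j))"
    have "incoherent_unitary d V"
    proof (rule key[OF Vu])
      fix \<rho>1 \<rho>2 i assume d1: "density d \<rho>1" and d2: "density d \<rho>2"
        and e: "\<forall>a<d. \<rho>1 $$ (a,a) = \<rho>2 $$ (a,a)" and i: "i < d"
      have "complex_of_real p * (V * \<rho>1 * cadj V) $$ (i,i)
          = (\<Sum>k\<in>K. inc_subchannel d (m k) (U k) (\<tau> k) (x k) (\<alpha> k) \<rho>1 $$ (i,i))"
        using eq d1 i by simp
      also have "\<dots> = (\<Sum>k\<in>K. inc_subchannel d (m k) (U k) (\<tau> k) (x k) (\<alpha> k) \<rho>2 $$ (i,i))"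
        using h e i dc[OF d1] dc[OF d2] by (intro sum.cong refl subchannel_diag) auto
      also have "\<dots> = complex_of_real p * (V * \<rho>2 * cadj V) $$ (i,i)"
        using eq d2 i by simp
      finally show "(V * \<rho>1 * cadj V) $$ (i,i) = (V * \<rho>2 * cadj V) $$ (i,i)"
        using p by simp
    qed
    with ninc show False by simp
  qed
qed

end
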